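(* Let $L_1,\dots,L_m$ be signed Laplacians of signed digraphs on $\{1,\dots,n\}$, each weight balanced with $-L_k$ EEP, and let $Q\in\mathbb{R}^{(n-1)\times n}$ satisfy $QQ^\top=I_{n-1}$, $Q\mathbf{1}=0$. Fix an integer $r\ge1$ and set $\hat L_k=L_k\oplus\cdots\oplus L_k$ ($r$-fold Kronecker sum) and $\hat Q=Q\otimes\cdots\otimes Q$ ($r$-fold Kronecker product). If there exists a symmetric positive definite $\hat P\in\mathbb{R}^{n^r\times n^r}$ such that \[ -\hat Q\hat L_k\hat P\hat Q^\top-\hat Q\hat P\hat L_k^\top\hat Q^\top\prec0\quad\text{for all }k=1,\dots,m, \] then $\{L_1,\dots,L_m\}$ is a consensus set for the switched system $\dot{\mathbf{x}}=-L_{\sigma(t)}\mathbf{x}$.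
   Context: For a signed digraph with real weighted adjacency matrix $A$ (entries of any sign), the signed Laplacian is $L=\Sigma-A$, $\Sigma=\mathrm{diag}(\sigma_i)$, $\sigma_i=\sum_jA_{ij}$, so $L\mathbf{1}=0$; weight balanced means $L^\top\mathbf{1}=0$. $M$ is EEP if there is $t_0\ge0$ with $e^{Mt}$ entrywise positive for all real $t\ge t_0$. The Kronecker sum is $A\oplus B=A\otimes I+I\otimes B$, and the $r$-fold version is defined iteratively. $X\prec0$ means symmetric negative definite. A switching signal is a piecewise constant map $\sigma:[0,\infty)\to\{1,\dots,m\}$ with finitely many discontinuities on every bounded interval; a consensus set is one for which, for every switching signal and every $\mathbf{x}(0)$, $\mathbf{x}(t)\to\alpha\mathbf{1}$ for some $\alpha\in\mathbb{R}$. *)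

theory Defs
  imports Complex_Main "Jordan_Normal_Form.Matrix"
begin

definition ones_vec :: "nat \<Rightarrow> real vec" where
  "ones_vec n = vec n (\<lambda>_. 1)"

definition signed_laplacian :: "real mat \<Rightarrow> real mat" where
  "signed_laplacian A = mat (dim_row A) (dim_col A)
     (\<lambda>(i,j). (if i = j then (\<Sum>l<dim_col A. A $$ (i,l)) else 0) - A $$ (i,j))"

definition is_signed_laplacian :: "nat \<Rightarrow> real mat \<Rightarrow> bool" where
  "is_signed_laplacian n L \<longleftrightarrow> (\<exists>A \<in> carrier_mat n n. L = signed_laplacian A)"

definition weight_balanced :: "nat \<Rightarrow> real mat \<Rightarrow> bool" where
  "weight_balanced n L \<longleftrightarrow> transpose_mat L *\<^sub>v ones_vec n = 0\<^sub>v n"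

definition mat_exp :: "real mat \<Rightarrow> real \<Rightarrow> real mat" where
  "mat_exp M t = mat (dim_row M) (dim_col M)
     (\<lambda>(i,j). (\<Sum>k. (t ^ k / fact k) * (M ^\<^sub>m k) $$ (i,j)))"

definition EEP :: "real mat \<Rightarrow> bool" where
  "EEP M \<longleftrightarrow> (\<exists>t0\<ge>0. \<forall>t\<ge>t0. \<forall>i<dim_row M. \<forall>j<dim_col M. mat_exp M t $$ (i,j) > 0)"

definition kron :: "real mat \<Rightarrow> real mat \<Rightarrow> real mat" where
  "kron A B = mat (dim_row A * dim_row B) (dim_col A * dim_col B)
     (\<lambda>(i,j). A $$ (i div dim_row B, j div dim_col B) * B $$ (i mod dim_row B, j mod dim_col B))"

definition kron_sum :: "real mat \<Rightarrow> real mat \<Rightarrow> real mat" where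
  "kron_sum A B = kron A (1\<^sub>m (dim_row B)) + kron (1\<^sub>m (dim_row A)) B"

fun kron_pow :: "real mat \<Rightarrow> nat \<Rightarrow> real mat" where
  "kron_pow Q 0 = 1\<^sub>m 1"
| "kron_pow Q (Suc r) = kron (kron_pow Q r) Q"

fun kron_sum_pow :: "real mat \<Rightarrow> nat \<Rightarrow> real mat" where
  "kron_sum_pow L 0 = 0\<^sub>m 1 1"
| "kron_sum_pow L (Suc r) = kron_sum (kron_sum_pow L r) L"

definition symmetric_mat :: "real mat \<Rightarrow> bool" where
  "symmetric_mat X \<longleftrightarrow> transpose_mat X = X"

definition pos_def :: "nat \<Rightarrow> real mat \<Rightarrow> bool" where
  "pos_def N X \<longleftrightarrow> X \<in> carrier_mat N N \<and> symmetric_mat X \<and>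
     (\<forall>v \<in> carrier_vec N. v \<noteq> 0\<^sub>v N \<longrightarrow> v \<bullet> (X *\<^sub>v v) > 0)"

definition neg_def :: "nat \<Rightarrow> real mat \<Rightarrow> bool" where
  "neg_def N X \<longleftrightarrow> X \<in> carrier_mat N N \<and> symmetric_mat X \<and>
     (\<forall>v \<in> carrier_vec N. v \<noteq> 0\<^sub>v N \<longrightarrow> v \<bullet> (X *\<^sub>v v) < 0)"

(* a switching signal with values in {0..<m} (the m modes), piecewise constant on [0,\<infinity>)
   with finitely many discontinuities on every bounded interval *)
definition switching_signal :: "nat \<Rightarrow> (real \<Rightarrow> nat) \<Rightarrow> bool" where
  "switching_signal m \<sigma> \<longleftrightarrow> (\<forall>t\<ge>0. \<sigma> t < m) \<and>
     (\<exists>D. (\<forall>T. finite (D \<inter> {0..T})) \<and>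
          (\<forall>t\<ge>0. t \<notin> D \<longrightarrow> (\<exists>e>0. \<forall>s\<ge>0. \<bar>s - t\<bar> < e \<longrightarrow> \<sigma> s = \<sigma> t)))"

(* x is a solution on [0,\<infinity>) of  x' = - L_{\<sigma>(t)} x : continuous, and satisfying the ODE
   at all times except a set of switching instants that is finite on bounded intervals *)
definition switched_solution ::
    "nat \<Rightarrow> real mat list \<Rightarrow> (real \<Rightarrow> nat) \<Rightarrow> (real \<Rightarrow> real vec) \<Rightarrow> bool" where
  "switched_solution n Ls \<sigma> x \<longleftrightarrow>
     (\<forall>t\<ge>0. x t \<in> carrier_vec n) \<and>
     (\<forall>i<n. continuous_on {0..} (\<lambda>t. x t $ i)) \<and>
     (\<exists>D. (\<forall>T. finite (D \<inter> {0..T})) \<and>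
        (\<forall>t\<ge>0. t \<notin> D \<longrightarrow> (\<forall>i<n.
           ((\<lambda>s. x s $ i) has_real_derivative ((- (Ls ! \<sigma> t)) *\<^sub>v x t) $ i) (at t within {0..}))))"

definition consensus_set :: "nat \<Rightarrow> real mat list \<Rightarrow> bool" where
  "consensus_set n Ls \<longleftrightarrow>
     (\<forall>\<sigma> x. switching_signal (length Ls) \<sigma> \<longrightarrow> switched_solution n Ls \<sigma> x \<longrightarrow>
        (\<exists>\<alpha>::real. \<forall>i<n. ((\<lambda>t. x t $ i) \<longlongrightarrow> \<alpha>) at_top))"

end

theory Submission
  imports Defs "HOL-Analysis.Analysis" "Jordan_Normal_Form.Determinant" "HOL-Real_Asymp.Real_Asymp"
begin

unbundle no vec_syntax
unbundle no inner_syntax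

lemma dm_bounds: "i < a * (b::nat) \<Longrightarrow> i div b < a \<and> i mod b < b"
  by (metis less_mult_imp_div_less mod_less_divisor mult_0_right not_less0 neq0_conv)

lemma kron_carrier[simp]: "kron A B \<in> carrier_mat (dim_row A * dim_row B) (dim_col A * dim_col B)"
  unfolding kron_def by auto

lemma kron_dims[simp]: "dim_row (kron A B) = dim_row A * dim_row B" "dim_col (kron A B) = dim_col A * dim_col B"
  unfolding kron_def by auto

lemma kron_index: "i < dim_row A * dim_row B \<Longrightarrow> j < dim_col A * dim_col B \<Longrightarrow>
  kron A B $$ (i,j) = A $$ (i div dim_row B, j div dim_col B) * B $$ (i mod dim_row B, j mod dim_col B)"
  unfolding kron_def by auto

lemma divmod_aux: "b < (q::nat) \<Longrightarrow> (b + a * q) div q = a \<and> (b + a * q) mod q = b"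
  by auto

lemma kron_mult:
  assumes A: "A \<in> carrier_mat r1 c1" and B: "B \<in> carrier_mat r2 c2"
    and C: "C \<in> carrier_mat c1 k1" and D: "D \<in> carrier_mat c2 k2"
  shows "kron A B * kron C D = kron (A * C) (B * D)"
proof (rule eq_matI)
  fix i j assume i: "i < dim_row (kron (A * C) (B * D))" and j: "j < dim_col (kron (A * C) (B * D))"
  have i': "i < r1 * r2" and j': "j < k1 * k2" using i j A B C D by auto
  have r2: "0 < r2" and k2: "0 < k2" using i' j' by (auto intro: ccontr)
  have idiv: "i div r2 < r1" "i mod r2 < r2" using i' r2 by (auto simp: less_mult_imp_div_less)
  have jdiv: "j div k2 < k1" "j mod k2 < k2" using j' k2 by (auto simp: less_mult_imp_div_less)
  have "(kron A B * kron C D) $$ (i,j) = (\<Sum>k<c1*c2. kron A B $$ (i,k) * kron C D $$ (k,j))"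
    using A B C D i' j' by (simp add: scalar_prod_def index_mult_mat atLeast0LessThan kron_def)
  also have "\<dots> = (\<Sum>a<c1. \<Sum>b<c2. kron A B $$ (i,b + a*c2) * kron C D $$ (b + a*c2,j))"
    by (rule sum_mult_product)
  also have "\<dots> = (\<Sum>a<c1. \<Sum>b<c2. (A $$ (i div r2, a) * C $$ (a, j div k2)) * (B $$ (i mod r2, b) * D $$ (b, j mod k2)))"
  proof (intro sum.cong refl)
    fix a b assume a: "a \<in> {..<c1}" and b: "b \<in> {..<c2}"
    have lt: "b + a * c2 < c1 * c2" using a b
      by (metis lessThan_iff add.commute mult.commute nat_add_left_cancel_less less_le_trans
           mult_less_cancel1 not_less_eq_eq trans_less_add2 Suc_leI mult_Suc_right add_less_mono1 linorder_not_le le_trans)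
    show "kron A B $$ (i,b + a*c2) * kron C D $$ (b + a*c2,j) = (A $$ (i div r2, a) * C $$ (a, j div k2)) * (B $$ (i mod r2, b) * D $$ (b, j mod k2))"
      using A B C D i' j' lt b divmod_aux[of b c2 a] by (simp add: kron_index)
  qed
  also have "\<dots> = (\<Sum>a<c1. A $$ (i div r2, a) * C $$ (a, j div k2)) * (\<Sum>b<c2. B $$ (i mod r2, b) * D $$ (b, j mod k2))"
    by (simp add: sum_product)
  also have "\<dots> = kron (A * C) (B * D) $$ (i,j)"
    using A B C D i' j' idiv jdiv by (simp add: kron_index scalar_prod_def atLeast0LessThan)
  finally show "(kron A B * kron C D) $$ (i,j) = kron (A * C) (B * D) $$ (i,j)" .
qed (use A B C D in auto)

lemma lt_mult_aux: "a < (c1::nat) \<Longrightarrow> b < c2 \<Longrightarrow> b + a * c2 < c1 * c2"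
proof -
  assume "a < c1" "b < c2"
  then have "b + a * c2 < c2 + a * c2" by simp
  also have "\<dots> = Suc a * c2" by simp
  also have "\<dots> \<le> c1 * c2" using \<open>a < c1\<close> by (intro mult_le_mono1) simp
  finally show ?thesis .
qed

lemma kron_add_left: assumes "A \<in> carrier_mat r c" "B \<in> carrier_mat r c"
  shows "kron (A + B) C = kron A C + kron B C"
proof (rule eq_matI)
  fix i j assume "i < dim_row (kron A C + kron B C)" "j < dim_col (kron A C + kron B C)"
  then have i: "i < r * dim_row C" and j: "j < c * dim_col C" using assms by auto
  show "kron (A + B) C $$ (i, j) = (kron A C + kron B C) $$ (i, j)"
    using assms i j dm_bounds[OF i] dm_bounds[OF j] by (simp add: kron_index distrib_right)
qed (use assms in auto)

lemma kron_add_right: assumes "B \<in> carrier_mat r c" "C \<in> carrier_mat r c"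
  shows "kron A (B + C) = kron A B + kron A C"
proof (rule eq_matI)
  fix i j assume "i < dim_row (kron A B + kron A C)" "j < dim_col (kron A B + kron A C)"
  then have i: "i < dim_row A * r" and j: "j < dim_col A * c" using assms by auto
  show "kron A (B + C) $$ (i, j) = (kron A B + kron A C) $$ (i, j)"
    using assms i j dm_bounds[OF i] dm_bounds[OF j] by (simp add: kron_index distrib_left)
qed (use assms in auto)

lemma kron_one: "kron (1\<^sub>m a) (1\<^sub>m b) = 1\<^sub>m (a * b)"
proof (rule eq_matI)
  fix i j assume "i < dim_row (1\<^sub>m (a * b))" "j < dim_col (1\<^sub>m (a * b))"
  then have i: "i < a * b" and j: "j < a * b" by auto
  then have b: "0 < b" by (auto intro: ccontr)
  have "(i div b = j div b \<and> i mod b = j mod b) = (i = j)"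
    by (metis div_mult_mod_eq)
  then show "kron (1\<^sub>m a) (1\<^sub>m b) $$ (i, j) = 1\<^sub>m (a * b) $$ (i, j)"
    using i j b by (auto simp: kron_index less_mult_imp_div_less)
qed auto

lemma kron_transpose: "transpose_mat (kron A B) = kron (transpose_mat A) (transpose_mat B)"
  by (intro eq_matI) (auto simp: kron_index dm_bounds)

lemma kron_pow_carrier: "Q \<in> carrier_mat p n \<Longrightarrow> kron_pow Q r \<in> carrier_mat (p ^ r) (n ^ r)"
  by (induction r) (auto simp: carrier_matD mult.commute)

lemma kron_sum_carrier: "A \<in> carrier_mat a a \<Longrightarrow> B \<in> carrier_mat b b \<Longrightarrow> kron_sum A B \<in> carrier_mat (a*b) (a*b)"
  unfolding kron_sum_def by auto

lemma kron_sum_pow_carrier: "L \<in> carrier_mat n n \<Longrightarrow> kron_sum_pow L r \<in> carrier_mat (n ^ r) (n ^ r)"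
proof (induction r)
  case (Suc r)
  then show ?case using kron_sum_carrier[OF Suc.IH Suc.prems] by (simp add: mult.commute)
qed auto

lemma kron_comm_step:
  assumes K: "K \<in> carrier_mat pr nr" and S: "S \<in> carrier_mat nr nr" and M: "M \<in> carrier_mat pr pr"
    and Q: "Q \<in> carrier_mat p n" and L: "L \<in> carrier_mat n n" and Lb: "Lb \<in> carrier_mat p p"
    and KS: "K * S = M * K" and QL: "Q * L = Lb * Q"
  shows "kron K Q * kron_sum S L = kron_sum M Lb * kron K Q"
proof -
  have "kron K Q * kron_sum S L = kron K Q * kron S (1\<^sub>m n) + kron K Q * kron (1\<^sub>m nr) L"
    unfolding kron_sum_def using K S Q L
    by (subst mult_add_distrib_mat[of _ "pr*p" "nr*n"]) (auto simp: carrier_matD)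
  also have "\<dots> = kron (K * S) (Q * 1\<^sub>m n) + kron (K * 1\<^sub>m nr) (Q * L)"
    using K S Q L by (simp add: kron_mult[of _ pr nr _ p n _ nr _ n] )
  also have "\<dots> = kron (M * K) Q + kron K (Lb * Q)" using K Q KS QL by simp
  also have "\<dots> = kron M (1\<^sub>m p) * kron K Q + kron (1\<^sub>m pr) Lb * kron K Q"
    using K M Q Lb by (simp add: kron_mult[of _ pr pr _ p p _ nr _ n])
  also have "\<dots> = kron_sum M Lb * kron K Q"
    unfolding kron_sum_def using K M Q Lb
    by (subst add_mult_distrib_mat[of _ "pr*p" "pr*p"]) (auto simp: carrier_matD)
  finally show ?thesis .
qed

lemma kron_comm:
  assumes Q: "Q \<in> carrier_mat p n" and L: "L \<in> carrier_mat n n" and Lb: "Lb \<in> carrier_mat p p"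
    and QL: "Q * L = Lb * Q"
  shows "kron_pow Q r * kron_sum_pow L r = kron_sum_pow Lb r * kron_pow Q r"
proof (induction r)
  case 0
  then show ?case by simp
next
  case (Suc r)
  show ?case using kron_comm_step[OF kron_pow_carrier[OF Q] kron_sum_pow_carrier[OF L] kron_sum_pow_carrier[OF Lb] Q L Lb Suc.IH QL]
    by simp
qed

lemma kron_orth:
  assumes Q: "Q \<in> carrier_mat p n" and QQ: "Q * transpose_mat Q = 1\<^sub>m p"
  shows "kron_pow Q r * transpose_mat (kron_pow Q r) = 1\<^sub>m (p ^ r)"
proof (induction r)
  case (Suc r)
  have K: "kron_pow Q r \<in> carrier_mat (p^r) (n^r)" by (rule kron_pow_carrier[OF Q])
  have "kron_pow Q (Suc r) * transpose_mat (kron_pow Q (Suc r)) =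
     kron (kron_pow Q r * transpose_mat (kron_pow Q r)) (Q * transpose_mat Q)"
    using K Q by (simp add: kron_transpose kron_mult[of _ "p^r" "n^r" _ p n _ "p^r" _ p])
  then show ?case using Suc.IH QQ by (simp add: kron_one mult.commute)
qed simp

definition vkron :: "real Matrix.vec \<Rightarrow> real Matrix.vec \<Rightarrow> real Matrix.vec" where
  "vkron a b = Matrix.vec (dim_vec a * dim_vec b) (\<lambda>i. a $ (i div dim_vec b) * b $ (i mod dim_vec b))"

lemma vkron_dim[simp]: "dim_vec (vkron a b) = dim_vec a * dim_vec b"
  unfolding vkron_def by simp

lemma vkron_index: "i < dim_vec a * dim_vec b \<Longrightarrow> vkron a b $ i = a $ (i div dim_vec b) * b $ (i mod dim_vec b)"
  unfolding vkron_def by simp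

lemma kron_mult_vec:
  assumes A: "A \<in> carrier_mat r1 c1" and B: "B \<in> carrier_mat r2 c2"
    and a: "a \<in> carrier_vec c1" and b: "b \<in> carrier_vec c2"
  shows "kron A B *\<^sub>v vkron a b = vkron (A *\<^sub>v a) (B *\<^sub>v b)"
proof (rule eq_vecI)
  fix i assume "i < dim_vec (vkron (A *\<^sub>v a) (B *\<^sub>v b))"
  then have i': "i < r1 * r2" using A B by auto
  have r2: "0 < r2" using i' by (auto intro: ccontr)
  have idiv: "i div r2 < r1" "i mod r2 < r2" using i' r2 by (auto simp: less_mult_imp_div_less)
  have "(kron A B *\<^sub>v vkron a b) $ i = (\<Sum>k<c1*c2. kron A B $$ (i,k) * vkron a b $ k)"
    using A B a b i' by (simp add: scalar_prod_def atLeast0LessThan)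
  also have "\<dots> = (\<Sum>x<c1. \<Sum>y<c2. kron A B $$ (i,y + x*c2) * vkron a b $ (y + x*c2))"
    by (rule sum_mult_product)
  also have "\<dots> = (\<Sum>x<c1. \<Sum>y<c2. (A $$ (i div r2, x) * a $ x) * (B $$ (i mod r2, y) * b $ y))"
  proof (intro sum.cong refl)
    fix x y assume x: "x \<in> {..<c1}" and y: "y \<in> {..<c2}"
    have lt: "y + x * c2 < c1 * c2" using x y lt_mult_aux by auto
    show "kron A B $$ (i,y + x*c2) * vkron a b $ (y + x*c2) = (A $$ (i div r2, x) * a $ x) * (B $$ (i mod r2, y) * b $ y)"
      using A B a b i' lt y divmod_aux[of y c2 x] by (simp add: kron_index vkron_index)
  qed
  also have "\<dots> = (\<Sum>x<c1. A $$ (i div r2, x) * a $ x) * (\<Sum>y<c2. B $$ (i mod r2, y) * b $ y)"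
    by (simp add: sum_product)
  also have "\<dots> = vkron (A *\<^sub>v a) (B *\<^sub>v b) $ i"
    using A B a b i' idiv by (simp add: vkron_index scalar_prod_def atLeast0LessThan)
  finally show "(kron A B *\<^sub>v vkron a b) $ i = vkron (A *\<^sub>v a) (B *\<^sub>v b) $ i" .
next
  show "dim_vec (kron A B *\<^sub>v vkron a b) = dim_vec (vkron (A *\<^sub>v a) (B *\<^sub>v b))"
    using A B by (simp add: carrier_matD)
qed

lemma vkron_add_left: assumes d: "dim_vec a = dim_vec a'" shows "vkron (a + a') b = vkron a b + vkron a' b"
proof (rule eq_vecI)
  fix i assume "i < dim_vec (vkron a b + vkron a' b)"
  then have i: "i < dim_vec a * dim_vec b" using d by simp
  have b: "i div dim_vec b < dim_vec a" "i mod dim_vec b < dim_vec b" using dm_bounds[OF i] by auto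
  have "vkron (a + a') b $ i = (a + a') $ (i div dim_vec b) * b $ (i mod dim_vec b)"
    using i d by (intro vkron_index) simp
  also have "\<dots> = a $ (i div dim_vec b) * b $ (i mod dim_vec b) + a' $ (i div dim_vec b) * b $ (i mod dim_vec b)"
    using b d by (simp add: distrib_right)
  also have "\<dots> = (vkron a b + vkron a' b) $ i" using i d by (simp add: vkron_index)
  finally show "vkron (a + a') b $ i = (vkron a b + vkron a' b) $ i" .
qed (use d in simp)
lemma vkron_carrier: "a \<in> carrier_vec na \<Longrightarrow> b \<in> carrier_vec nb \<Longrightarrow> vkron a b \<in> carrier_vec (na*nb)"
  by (metis carrier_vecD carrier_vecI vkron_dim)
lemma kron_sum_mult_vec:
  assumes A: "A \<in> carrier_mat na na" and B: "B \<in> carrier_mat nb nb"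
    and a: "a \<in> carrier_vec na" and b: "b \<in> carrier_vec nb"
  shows "kron_sum A B *\<^sub>v vkron a b = vkron (A *\<^sub>v a) b + vkron a (B *\<^sub>v b)"
proof -
  have "kron_sum A B *\<^sub>v vkron a b = kron A (1\<^sub>m nb) *\<^sub>v vkron a b + kron (1\<^sub>m na) B *\<^sub>v vkron a b"
    unfolding kron_sum_def using A B a b
    by (subst add_mult_distrib_mat_vec[of _ "na*nb" "na*nb"]) (auto simp: carrier_matD vkron_carrier)
  also have "\<dots> = vkron (A *\<^sub>v a) b + vkron a (B *\<^sub>v b)"
    using A B a b by (simp add: kron_mult_vec[of _ na na _ nb nb])
  finally show ?thesis .
qed

fun vkp :: "real Matrix.vec \<Rightarrow> nat \<Rightarrow> real Matrix.vec" where
  "vkp u 0 = Matrix.vec 1 (\<lambda>_. 1)"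
| "vkp u (Suc r) = vkron (vkp u r) u"

lemma vkp_dim[simp]: "dim_vec (vkp u r) = dim_vec u ^ r"
  by (induction r) (auto simp: mult.commute)

lemma vkp_carrier: "u \<in> carrier_vec p \<Longrightarrow> vkp u r \<in> carrier_vec (p ^ r)"
  by (metis carrier_vecD carrier_vecI vkp_dim)

lemma kron_pow_vkp:
  assumes Q: "Q \<in> carrier_mat p n" and x: "x \<in> carrier_vec n"
  shows "kron_pow Q r *\<^sub>v vkp x r = vkp (Q *\<^sub>v x) r"
proof (induction r)
  case 0
  then show ?case by (intro eq_vecI) (auto simp: scalar_prod_def)
next
  case (Suc r)
  then show ?case using kron_mult_vec[OF kron_pow_carrier[OF Q] Q vkp_carrier[OF x] x] by simp
qed


lemma quad_form_sum: fixes X :: "real mat" assumes X: "X \<in> carrier_mat N N" and v: "v \<in> carrier_vec N"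
  shows "v \<bullet> (X *\<^sub>v v) = (\<Sum>i<N. \<Sum>j<N. X $$ (i,j) * v $ i * v $ j)"
  using X v by (simp add: scalar_prod_def atLeast0LessThan sum_distrib_left row_def)
     (intro sum.cong refl, simp add: mult_ac)

lemma sq_sum: fixes v :: "real Matrix.vec" shows "v \<in> carrier_vec N \<Longrightarrow> v \<bullet> v = (\<Sum>i<N. (v $ i)^2)"
  by (simp add: scalar_prod_def atLeast0LessThan power2_eq_square)

lemma pd_lower:
  fixes X :: "real mat"
  assumes X: "X \<in> carrier_mat N N"
    and pd: "\<forall>v \<in> carrier_vec N. v \<noteq> 0\<^sub>v N \<longrightarrow> v \<bullet> (X *\<^sub>v v) > 0"
  shows "\<exists>c>0. \<forall>v \<in> carrier_vec N. v \<bullet> (X *\<^sub>v v) \<ge> c * (v \<bullet> v)"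
proof (cases "N = 0")
  case True
  show ?thesis
  proof (intro exI[of _ 1] conjI ballI)
    fix v :: "real Matrix.vec" assume "v \<in> carrier_vec N"
    then show "v \<bullet> (X *\<^sub>v v) \<ge> 1 * (v \<bullet> v)" using X True by (simp add: quad_form_sum sq_sum)
  qed simp
next
  case False
  define T where "T = product_topology (\<lambda>_::nat. euclideanreal) {..<N}"
  define f where "f w = (\<Sum>i<N. \<Sum>j<N. X $$ (i,j) * w i * w j)" for w :: "nat \<Rightarrow> real"
  define g where "g w = (\<Sum>i<N. (w i)^2)" for w :: "nat \<Rightarrow> real"
  define K where "K = PiE {..<N} (\<lambda>_::nat. {-1..1::real})"
  define S where "S = {w \<in> topspace T. g w \<in> {1}}"
  have contf: "continuous_map T euclideanreal f"
    unfolding f_def T_def by (intro continuous_intros) auto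
  have contg: "continuous_map T euclideanreal g"
    unfolding g_def T_def by (intro continuous_intros) auto
  have cK: "compactin T K" unfolding K_def T_def by (simp add: compactin_PiE)
  have SK: "S \<subseteq> K"
  proof
    fix w assume w: "w \<in> S"
    then have "w \<in> PiE {..<N} (\<lambda>_. UNIV)" and g1: "g w = 1" unfolding S_def T_def by auto
    moreover have "\<bar>w i\<bar> \<le> 1" if "i < N" for i
    proof -
      have "(w i)^2 \<le> g w" unfolding g_def using that
        by (intro member_le_sum) auto
      then have "(w i)^2 \<le> 1^2" using g1 by simp
      then show ?thesis using abs_le_square_iff[of "w i" 1] by simp
    qed
    ultimately show "w \<in> K" unfolding K_def by (auto simp: PiE_iff abs_le_iff)
  qed
  have cS: "compactin T S"
    by (rule closed_compactin[OF cK SK]) (unfold S_def, rule closedin_continuous_map_preimage[OF contg], simp)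
  have comp: "compact (f ` S)" using image_compactin[OF cS contf] by simp
  define e0 :: "nat \<Rightarrow> real" where "e0 = (\<lambda>i. if i = 0 then 1 else if i < N then 0 else undefined)"
  have "e0 \<in> S" using False unfolding S_def T_def g_def e0_def
    by (auto simp: PiE_iff extensional_def sum.remove[of "{..<N}" 0])
  then have ne: "f ` S \<noteq> {}" by auto
  obtain m where m: "m \<in> f ` S" and mmin: "\<forall>t \<in> f ` S. m \<le> t"
    using compact_attains_inf[OF comp ne] by blast
  obtain w0 where w0: "w0 \<in> S" and mw0: "m = f w0" using m by auto
  define v0 where "v0 = Matrix.vec N w0"
  have v0c: "v0 \<in> carrier_vec N" unfolding v0_def by simp
  have "g w0 = 1" using w0 unfolding S_def by auto
  then have "v0 \<bullet> v0 = 1" using sq_sum[OF v0c] unfolding v0_def g_def by simp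
  then have "v0 \<noteq> 0\<^sub>v N" by auto
  then have "v0 \<bullet> (X *\<^sub>v v0) > 0" using pd v0c by auto
  then have mpos: "m > 0" using quad_form_sum[OF X v0c] unfolding mw0 f_def v0_def by simp
  show ?thesis
  proof (intro exI[of _ m] conjI ballI mpos)
    fix v :: "real Matrix.vec" assume v: "v \<in> carrier_vec N"
    show "v \<bullet> (X *\<^sub>v v) \<ge> m * (v \<bullet> v)"
    proof (cases "v \<bullet> v = 0")
      case True
      show ?thesis
      proof (cases "v = 0\<^sub>v N")
        case True
        then show ?thesis using X by simp
      next
        case False
        then show ?thesis using pd v \<open>v \<bullet> v = 0\<close> by fastforce
      qed
    next
      case nz: False
      have vv: "v \<bullet> v > 0" using nz sq_sum[OF v] by (metis less_eq_real_def sum_nonneg zero_le_power2)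
      define s where "s = sqrt (v \<bullet> v)"
      have s: "s > 0" "s * s = v \<bullet> v" using vv unfolding s_def by auto
      define w where "w = restrict (\<lambda>i. v $ i / s) {..<N}"
      have gw: "g w = 1"
      proof -
        have "g w = (\<Sum>i<N. (v $ i)^2) / (s * s)" unfolding g_def w_def
          by (simp add: sum_divide_distrib power_divide power2_eq_square)
        then show ?thesis using s sq_sum[OF v] nz by simp
      qed
      have "w \<in> S" unfolding S_def T_def using gw by (auto simp: w_def)
      then have "m \<le> f w" using mmin by auto
      also have "f w = (v \<bullet> (X *\<^sub>v v)) / (s * s)"
        unfolding f_def w_def quad_form_sum[OF X v]
        by (simp add: sum_divide_distrib)
      finally have "m \<le> (v \<bullet> (X *\<^sub>v v)) / (v \<bullet> v)" using s by simp
      then show ?thesis using vv by (simp add: pos_le_divide_eq)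
    qed
  qed
qed
lemma lap_row:
  assumes "is_signed_laplacian n L" "i < n"
  shows "(\<Sum>j<n. L $$ (i,j)) = 0"
proof -
  obtain A where A: "A \<in> carrier_mat n n" and L: "L = signed_laplacian A"
    using assms(1) unfolding is_signed_laplacian_def by auto
  have "(\<Sum>j<n. L $$ (i,j)) = (\<Sum>j<n. (if i = j then (\<Sum>l<n. A $$ (i,l)) else 0) - A $$ (i,j))"
    using A assms(2) unfolding L signed_laplacian_def by (intro sum.cong) auto
  also have "\<dots> = 0" using assms(2) by (simp add: sum_subtractf)
  finally show ?thesis .
qed

lemma bal_col:
  assumes "weight_balanced n L" "L \<in> carrier_mat n n" "j < n"
  shows "(\<Sum>i<n. L $$ (i,j)) = 0"
proof -
  have "(transpose_mat L *\<^sub>v ones_vec n) $ j = 0" using assms unfolding weight_balanced_def by simp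
  then show ?thesis using assms
    by (simp add: ones_vec_def scalar_prod_def atLeast0LessThan row_def)
qed

lemma QtQ:
  fixes Q :: "real mat"
  assumes Qdim: "Q \<in> carrier_mat (n - 1) n" and QQt: "Q * transpose_mat Q = 1\<^sub>m (n - 1)"
      and Q1: "Q *\<^sub>v ones_vec n = 0\<^sub>v (n - 1)" and n: "n \<ge> 1"
      and i: "i < n" and j: "j < n"
  shows "(\<Sum>k<n-1. Q $$ (k,i) * Q $$ (k,j)) = (if i = j then 1 else 0) - 1 / real n"
proof -
  define M where "M = Matrix.mat n n (\<lambda>(a,b). if a < n - 1 then Q $$ (a,b) else 1 / sqrt (real n))"
  have M: "M \<in> carrier_mat n n" unfolding M_def by simp
  have Qrow: "(\<Sum>b<n. Q $$ (a,b)) = 0" if "a < n - 1" for a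
  proof -
    have "(Q *\<^sub>v ones_vec n) $ a = 0" using Q1 that by simp
    then show ?thesis using Qdim that by (simp add: ones_vec_def scalar_prod_def atLeast0LessThan row_def)
  qed
  have QQ: "(\<Sum>b<n. Q $$ (a,b) * Q $$ (c,b)) = (if a = c then 1 else 0)" if "a < n - 1" "c < n - 1" for a c
  proof -
    have "(Q * transpose_mat Q) $$ (a,c) = (if a = c then 1 else 0)" using QQt that by simp
    then show ?thesis using Qdim that by (simp add: scalar_prod_def atLeast0LessThan row_def col_def)
  qed
  have sn: "sqrt (real n) * sqrt (real n) = real n" by simp
  have MMt: "M * transpose_mat M = 1\<^sub>m n"
  proof (rule eq_matI)
    fix a c assume "a < dim_row (1\<^sub>m n)" "c < dim_col (1\<^sub>m n)"
    then have a: "a < n" and c: "c < n" by auto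
    have e: "(M * transpose_mat M) $$ (a,c) = (\<Sum>b<n. M $$ (a,b) * M $$ (c,b))"
      using M a c by (simp add: scalar_prod_def atLeast0LessThan row_def col_def)
    show "(M * transpose_mat M) $$ (a,c) = 1\<^sub>m n $$ (a,c)"
    proof (cases "a < n - 1")
      case aT: True
      show ?thesis
      proof (cases "c < n - 1")
        case True
        then show ?thesis using aT a c QQ[OF aT True] unfolding e by (simp add: M_def)
      next
        case False
        then have "(\<Sum>b<n. M $$ (a,b) * M $$ (c,b)) = (\<Sum>b<n. Q $$ (a,b)) / sqrt (real n)"
          using aT c by (simp add: M_def sum_divide_distrib)
        then show ?thesis using aT False Qrow[OF aT] a c unfolding e by auto
      qed
    next
      case aF: False
      show ?thesis
      proof (cases "c < n - 1")
        case True
        then have "(\<Sum>b<n. M $$ (a,b) * M $$ (c,b)) = (\<Sum>b<n. Q $$ (c,b)) / sqrt (real n)"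
          using aF a by (simp add: M_def sum_divide_distrib mult.commute)
        then show ?thesis using aF True Qrow[OF True] a c unfolding e by auto
      next
        case False
        then have ac: "a = c" using aF a c by auto
        have "(\<Sum>b<n. M $$ (a,b) * M $$ (c,b)) = (\<Sum>b<n. 1 / (sqrt (real n) * sqrt (real n)))"
          using aF False a c by (simp add: M_def)
        also have "\<dots> = 1" using n by simp
        finally show ?thesis using ac a unfolding e by simp
      qed
    qed
  qed (use M in simp_all)
  have MtM: "transpose_mat M * M = 1\<^sub>m n"
    using mat_mult_left_right_inverse[OF M _ MMt] M by simp
  have "(transpose_mat M * M) $$ (i,j) = (\<Sum>k<n. M $$ (k,i) * M $$ (k,j))"
    using M i j by (simp add: scalar_prod_def atLeast0LessThan row_def col_def)
  also have "\<dots> = (\<Sum>k<n-1. M $$ (k,i) * M $$ (k,j)) + M $$ (n-1,i) * M $$ (n-1,j)"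
  proof -
    obtain n' where "n = Suc n'" using n by (cases n) auto
    then show ?thesis by simp
  qed
  also have "\<dots> = (\<Sum>k<n-1. Q $$ (k,i) * Q $$ (k,j)) + 1 / real n"
    using i j n by (simp add: M_def)
  finally show ?thesis using MtM i j by simp
qed

lemma QL_comm:
  fixes Q L :: "real mat"
  assumes Qdim: "Q \<in> carrier_mat (n - 1) n" and QQt: "Q * transpose_mat Q = 1\<^sub>m (n - 1)"
      and Q1: "Q *\<^sub>v ones_vec n = 0\<^sub>v (n - 1)" and n: "n \<ge> 1"
      and L: "L \<in> carrier_mat n n" and lap: "is_signed_laplacian n L"
  shows "Q * L = (Q * L * transpose_mat Q) * Q"
proof -
  define J where "J = Matrix.mat n n (\<lambda>_. 1::real)"
  define c where "c = 1 / real n"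
  have J: "J \<in> carrier_mat n n" unfolding J_def by simp
  have E: "transpose_mat Q * Q + c \<cdot>\<^sub>m J = 1\<^sub>m n"
  proof (rule eq_matI)
    fix i j assume "i < dim_row (1\<^sub>m n)" "j < dim_col (1\<^sub>m n)"
    then have i: "i < n" and j: "j < n" by auto
    have "(transpose_mat Q * Q) $$ (i,j) = (\<Sum>k<n-1. Q $$ (k,i) * Q $$ (k,j))"
      using Qdim i j by (simp add: scalar_prod_def atLeast0LessThan row_def col_def)
    then show "(transpose_mat Q * Q + c \<cdot>\<^sub>m J) $$ (i, j) = 1\<^sub>m n $$ (i, j)"
      using QtQ[OF Qdim QQt Q1 n i j] Qdim i j by (simp add: J_def c_def)
  qed (use Qdim J in auto)
  have LJ: "L * J = 0\<^sub>m n n"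
  proof (rule eq_matI)
    fix i j assume "i < dim_row (0\<^sub>m n n :: real mat)" "j < dim_col (0\<^sub>m n n :: real mat)"
    then have i: "i < n" and j: "j < n" by auto
    have "(L * J) $$ (i,j) = (\<Sum>k<n. L $$ (i,k))"
      using L i j by (simp add: J_def scalar_prod_def atLeast0LessThan row_def col_def)
    then show "(L * J) $$ (i,j) = 0\<^sub>m n n $$ (i,j)" using lap_row[OF lap i] i j by simp
  qed (use L J in auto)
  have QL: "Q * L \<in> carrier_mat (n-1) n" using Qdim L by simp
  have "Q * L = (Q * L) * (transpose_mat Q * Q + c \<cdot>\<^sub>m J)" unfolding E using QL Qdim L by simp
  also have "\<dots> = (Q * L) * (transpose_mat Q * Q) + (Q * L) * (c \<cdot>\<^sub>m J)"
    using QL Qdim J by (intro mult_add_distrib_mat) auto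
  also have "(Q * L) * (c \<cdot>\<^sub>m J) = c \<cdot>\<^sub>m (Q * (L * J))"
    using QL Qdim J L by (simp add: mult_smult_distrib[OF QL J])
  also have "\<dots> = 0\<^sub>m (n-1) n" using LJ Qdim by simp
  also have "(Q * L) * (transpose_mat Q * Q) = (Q * L * transpose_mat Q) * Q"
    using QL Qdim by simp
  finally have fin: "Q * L = (Q * L * transpose_mat Q) * Q + 0\<^sub>m (n-1) n" .
  have "(Q * L * transpose_mat Q) * Q \<in> carrier_mat (n-1) n" using Qdim L by (meson mult_carrier_mat transpose_carrier_mat)
  from right_add_zero_mat[OF this] fin show ?thesis by simp
qed

lemma quad_upper:
  fixes X :: "real mat"
  assumes X: "X \<in> carrier_mat N N"
  shows "\<exists>C>0. \<forall>v \<in> carrier_vec N. \<bar>v \<bullet> (X *\<^sub>v v)\<bar> \<le> C * (v \<bullet> v)"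
proof -
  define C where "C = (\<Sum>i<N. \<Sum>j<N. \<bar>X $$ (i,j)\<bar>) + 1"
  have C0: "(\<Sum>i<N. \<Sum>j<N. \<bar>X $$ (i,j)\<bar>) \<ge> 0" by (intro sum_nonneg) auto
  show ?thesis
  proof (intro exI[of _ C] conjI ballI)
    show "C > 0" using C0 unfolding C_def by simp
    fix v :: "real Matrix.vec" assume v: "v \<in> carrier_vec N"
    have vv: "v \<bullet> v = (\<Sum>i<N. (v $ i)^2)" using v by (simp add: scalar_prod_def atLeast0LessThan power2_eq_square)
    have vv0: "v \<bullet> v \<ge> 0" unfolding vv by (intro sum_nonneg) auto
    have sq: "(v $ i)^2 \<le> v \<bullet> v" if "i < N" for i unfolding vv using that by (intro member_le_sum) auto
    have pr: "\<bar>v $ i * v $ j\<bar> \<le> v \<bullet> v" if "i < N" "j < N" for i j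
    proof -
      have "0 \<le> (\<bar>v $ i\<bar> - \<bar>v $ j\<bar>)^2" by simp
      then have "2 * (\<bar>v $ i\<bar> * \<bar>v $ j\<bar>) \<le> (v $ i)^2 + (v $ j)^2"
        unfolding power2_diff power2_abs by simp
      then have "\<bar>v $ i * v $ j\<bar> \<le> ((v $ i)^2 + (v $ j)^2) / 2"
        by (simp add: abs_mult)
      moreover have "((v $ i)^2 + (v $ j)^2) / 2 \<le> v \<bullet> v" using sq[OF that(1)] sq[OF that(2)] by simp
      ultimately show ?thesis by (rule order.trans)
    qed
    have "v \<bullet> (X *\<^sub>v v) = (\<Sum>i<N. \<Sum>j<N. X $$ (i,j) * (v $ i * v $ j))"
      using X v by (simp add: scalar_prod_def atLeast0LessThan sum_distrib_left row_def)
        (intro sum.cong refl, simp add: mult_ac)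
    then have "\<bar>v \<bullet> (X *\<^sub>v v)\<bar> = \<bar>\<Sum>i<N. \<Sum>j<N. X $$ (i,j) * (v $ i * v $ j)\<bar>" by simp
    also have "\<dots> \<le> (\<Sum>i<N. \<bar>\<Sum>j<N. X $$ (i,j) * (v $ i * v $ j)\<bar>)" by (rule sum_abs)
    also have "\<dots> \<le> (\<Sum>i<N. \<Sum>j<N. \<bar>X $$ (i,j) * (v $ i * v $ j)\<bar>)" by (intro sum_mono sum_abs)
    also have "\<dots> = (\<Sum>i<N. \<Sum>j<N. \<bar>X $$ (i,j)\<bar> * \<bar>v $ i * v $ j\<bar>)" by (simp only: abs_mult)
    also have "\<dots> \<le> (\<Sum>i<N. \<Sum>j<N. \<bar>X $$ (i,j)\<bar> * (v \<bullet> v))"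
      using pr by (intro sum_mono mult_left_mono) auto
    also have "\<dots> = (\<Sum>i<N. \<Sum>j<N. \<bar>X $$ (i,j)\<bar>) * (v \<bullet> v)"
      by (simp add: sum_distrib_right)
    also have "\<dots> \<le> C * (v \<bullet> v)" unfolding C_def using vv0 by (intro mult_right_mono) auto
    finally show "\<bar>v \<bullet> (X *\<^sub>v v)\<bar> \<le> C * (v \<bullet> v)" .
  qed
qed

lemma nonincr:
  fixes g g' :: "real \<Rightarrow> real"
  assumes cont: "continuous_on {0..} g"
    and D: "\<forall>T. finite (D \<inter> {0..T})"
    and der: "\<And>t. t > 0 \<Longrightarrow> t \<notin> D \<Longrightarrow> (g has_real_derivative g' t) (at t within {0..})"
    and neg: "\<And>t. t > 0 \<Longrightarrow> t \<notin> D \<Longrightarrow> g' t \<le> 0"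
    and ab: "0 \<le> a" "a \<le> b"
  shows "g b \<le> g a"
proof -
  define S where "S = insert a (D \<inter> {0..b})"
  have fS: "finite S" unfolding S_def using D by auto
  define f' where "f' x = (if x \<in> S then 0 else g' x)" for x
  have "(f' has_integral g b - g a) {a..b}"
  proof (rule fundamental_theorem_of_calculus_strong[OF fS ab(2)])
    fix x assume x: "x \<in> {a..b} - S"
    then have xp: "x > 0" and xD: "x \<notin> D" using ab unfolding S_def by auto
    have "at x within {0..} = at x" using xp by (intro at_within_interior) auto
    then have "(g has_real_derivative g' x) (at x)"
      using der[OF xp xD] by simp
    then show "(g has_vector_derivative f' x) (at x)"
      using x by (simp add: f'_def has_real_derivative_iff_has_vector_derivative)
  next
    show "continuous_on {a..b} g" using ab by (intro continuous_on_subset[OF cont]) auto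
  qed
  moreover have "((\<lambda>_. 0::real) has_integral 0) {a..b}" by (rule has_integral_0)
  moreover have "f' x \<le> 0" if "x \<in> {a..b}" for x
    using that ab neg unfolding f'_def S_def by auto
  ultimately have "g b - g a \<le> 0" by (rule has_integral_le)
  then show ?thesis by simp
qed

lemma decay:
  fixes V V' :: "real \<Rightarrow> real"
  assumes cont: "continuous_on {0..} V"
    and D: "\<forall>T. finite (D \<inter> {0..T})"
    and der: "\<And>t. t > 0 \<Longrightarrow> t \<notin> D \<Longrightarrow> (V has_real_derivative V' t) (at t within {0..})"
    and le: "\<And>t. t > 0 \<Longrightarrow> t \<notin> D \<Longrightarrow> V' t \<le> - lam * V t"
    and t: "t \<ge> 0"
  shows "V t \<le> V 0 * exp (- lam * t)"
proof -
  define g where "g s = V s * exp (lam * s)" for s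
  define g' where "g' s = V' s * exp (lam * s) + V s * (exp (lam * s) * lam)" for s
  have "g t \<le> g 0"
  proof (rule nonincr[OF _ D, of g g'])
    show "continuous_on {0..} g" unfolding g_def by (intro continuous_intros cont)
  next
    fix s :: real assume s: "s > 0" "s \<notin> D"
    have e: "((\<lambda>s. exp (lam * s)) has_real_derivative exp (lam * s) * lam) (at s within {0..})"
      by (auto intro!: derivative_eq_intros)
    show "(g has_real_derivative g' s) (at s within {0..})"
      unfolding g_def g'_def using DERIV_mult[OF der[OF s] e] by (simp add: algebra_simps)
  next
    fix s :: real assume s: "s > 0" "s \<notin> D"
    have "g' s = (V' s + lam * V s) * exp (lam * s)" unfolding g'_def by (simp add: algebra_simps)
    also have "\<dots> \<le> 0" using le[OF s] by (intro mult_nonpos_nonneg) auto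
    finally show "g' s \<le> 0" .
  qed (use t in auto)
  then have "V t * exp (lam * t) \<le> V 0" unfolding g_def by simp
  then have "V t * exp (lam * t) * exp (- lam * t) \<le> V 0 * exp (- lam * t)"
    by (intro mult_right_mono) auto
  then show ?thesis by (simp add: mult.assoc exp_add[symmetric])
qed

lemma const_fun:
  fixes g g' :: "real \<Rightarrow> real"
  assumes cont: "continuous_on {0..} g"
    and D: "\<forall>T. finite (D \<inter> {0..T})"
    and der: "\<And>t. t > 0 \<Longrightarrow> t \<notin> D \<Longrightarrow> (g has_real_derivative 0) (at t within {0..})"
    and t: "t \<ge> 0"
  shows "g t = g 0"
proof -
  have "g t \<le> g 0" by (rule nonincr[OF cont D, where g'="\<lambda>_. 0"]) (use der t in auto)
  have hd: "((\<lambda>s. - g s) has_real_derivative 0) (at s within {0..})" if "s > 0" "s \<notin> D" for s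
    using DERIV_minus[OF der[OF that]] by simp
  have hc: "continuous_on {0..} (\<lambda>s. - g s)" by (intro continuous_intros cont)
  have "(\<lambda>s. - g s) t \<le> (\<lambda>s. - g s) 0" by (rule nonincr[OF hc D hd]) (use t in auto)
  moreover note \<open>g t \<le> g 0\<close>
  ultimately show ?thesis by simp
qed

lemma bilin_sum: fixes W :: "real mat"
  assumes W: "W \<in> carrier_mat N N" and a: "a \<in> carrier_vec N" and b: "b \<in> carrier_vec N"
  shows "a \<bullet> (W *\<^sub>v b) = (\<Sum>i<N. \<Sum>j<N. W $$ (i,j) * (a $ i * b $ j))"
  using W a b by (simp add: scalar_prod_def atLeast0LessThan sum_distrib_left row_def)
     (intro sum.cong refl, simp add: mult_ac)

lemma quad_deriv:
  fixes W :: "real mat" and z :: "real \<Rightarrow> real Matrix.vec"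
  assumes W: "W \<in> carrier_mat N N" and zc: "\<And>s. z s \<in> carrier_vec N" and dz: "dz \<in> carrier_vec N"
    and der: "\<And>i. i < N \<Longrightarrow> ((\<lambda>s. z s $ i) has_real_derivative dz $ i) (at t within S)"
  shows "((\<lambda>s. z s \<bullet> (W *\<^sub>v z s)) has_real_derivative (dz \<bullet> (W *\<^sub>v z t) + z t \<bullet> (W *\<^sub>v dz))) (at t within S)"
proof -
  have f: "(\<lambda>s. z s \<bullet> (W *\<^sub>v z s)) = (\<lambda>s. \<Sum>i<N. \<Sum>j<N. W $$ (i,j) * (z s $ i * z s $ j))"
    using bilin_sum[OF W zc zc] by auto
  have "((\<lambda>s. \<Sum>i<N. \<Sum>j<N. W $$ (i,j) * (z s $ i * z s $ j)) has_real_derivative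
      (\<Sum>i<N. \<Sum>j<N. W $$ (i,j) * (dz $ i * z t $ j + dz $ j * z t $ i))) (at t within S)"
    by (intro DERIV_sum DERIV_cmult DERIV_mult der) auto
  moreover have "(\<Sum>i<N. \<Sum>j<N. W $$ (i,j) * (dz $ i * z t $ j + dz $ j * z t $ i)) =
      dz \<bullet> (W *\<^sub>v z t) + z t \<bullet> (W *\<^sub>v dz)"
    unfolding bilin_sum[OF W dz zc] bilin_sum[OF W zc dz]
    by (simp add: sum.distrib[symmetric] algebra_simps)
  ultimately show ?thesis unfolding f by simp
qed

lemma vkron_uminus_left: "vkron (- a) b = - vkron a b"
proof (rule eq_vecI)
  fix i assume "i < dim_vec (- vkron a b)"
  then have i: "i < dim_vec a * dim_vec b" by simp
  show "vkron (- a) b $ i = (- vkron a b) $ i"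
    using i dm_bounds[OF i] by (simp add: vkron_index)
qed simp

lemma vkron_uminus_right: "vkron a (- b) = - vkron a b"
proof (rule eq_vecI)
  fix i assume "i < dim_vec (- vkron a b)"
  then have i: "i < dim_vec a * dim_vec b" by simp
  show "vkron a (- b) $ i = (- vkron a b) $ i"
    using i dm_bounds[OF i] by (simp add: vkron_index)
qed simp

fun vkpd :: "real Matrix.vec \<Rightarrow> real Matrix.vec \<Rightarrow> nat \<Rightarrow> real Matrix.vec" where
  "vkpd u du 0 = 0\<^sub>v 1"
| "vkpd u du (Suc r) = vkron (vkpd u du r) u + vkron (vkp u r) du"

lemma vkpd_dim[simp]: "dim_vec u = dim_vec du \<Longrightarrow> dim_vec (vkpd u du r) = dim_vec u ^ r"
  by (induction r) (auto simp: mult.commute)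

lemma vkp_deriv:
  fixes u :: "real \<Rightarrow> real Matrix.vec"
  assumes uc: "\<And>s. u s \<in> carrier_vec p" and du: "du \<in> carrier_vec p"
    and der: "\<And>k. k < p \<Longrightarrow> ((\<lambda>s. u s $ k) has_real_derivative du $ k) (at t within S)"
  shows "i < p ^ r \<Longrightarrow> ((\<lambda>s. vkp (u s) r $ i) has_real_derivative vkpd (u t) du r $ i) (at t within S)"
proof (induction r arbitrary: i)
  case 0
  then show ?case by simp
next
  case (Suc r)
  have dimu: "dim_vec (u s) = p" for s using uc[of s] by auto
  have dimdu: "dim_vec du = p" using du by auto
  have i: "i < p ^ r * p" using Suc.prems by (simp add: mult.commute)
  have b: "i div p < p ^ r" "i mod p < p" using dm_bounds[OF i] by auto
  have f: "(\<lambda>s. vkp (u s) (Suc r) $ i) = (\<lambda>s. vkp (u s) r $ (i div p) * u s $ (i mod p))"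
    using i dimu by (auto simp: vkron_index)
  have "((\<lambda>s. vkp (u s) r $ (i div p) * u s $ (i mod p)) has_real_derivative
      vkpd (u t) du r $ (i div p) * u t $ (i mod p) + du $ (i mod p) * vkp (u t) r $ (i div p)) (at t within S)"
    by (rule DERIV_mult[OF Suc.IH[OF b(1)] der[OF b(2)]])
  moreover have "vkpd (u t) du (Suc r) $ i = vkpd (u t) du r $ (i div p) * u t $ (i mod p) + du $ (i mod p) * vkp (u t) r $ (i div p)"
    using i dimu dimdu by (simp add: vkron_index)
  ultimately show ?case unfolding f by simp
qed

lemma neg_add_vec: "(a :: real Matrix.vec) \<in> carrier_vec k \<Longrightarrow> b \<in> carrier_vec k \<Longrightarrow> - (a + b) = - a + - b"
  by (intro eq_vecI) auto

lemma vkpd_eq: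
  assumes M: "M \<in> carrier_mat p p" and u: "u \<in> carrier_vec p"
  shows "vkpd u (- (M *\<^sub>v u)) r = - (kron_sum_pow M r *\<^sub>v vkp u r)"
proof (induction r)
  case 0
  then show ?case by (intro eq_vecI) auto
next
  case (Suc r)
  have S: "kron_sum_pow M r \<in> carrier_mat (p^r) (p^r)" by (rule kron_sum_pow_carrier[OF M])
  have z: "vkp u r \<in> carrier_vec (p^r)" by (rule vkp_carrier[OF u])
  have "kron_sum_pow M (Suc r) *\<^sub>v vkp u (Suc r) = vkron (kron_sum_pow M r *\<^sub>v vkp u r) u + vkron (vkp u r) (M *\<^sub>v u)"
    using kron_sum_mult_vec[OF S M z u] by simp
  moreover have "vkpd u (- (M *\<^sub>v u)) (Suc r) = vkron (- (kron_sum_pow M r *\<^sub>v vkp u r)) u + vkron (vkp u r) (- (M *\<^sub>v u))"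
    using Suc.IH by simp
  moreover have "vkron (kron_sum_pow M r *\<^sub>v vkp u r) u \<in> carrier_vec (p^r*p)"
    using S z u by (intro vkron_carrier) auto
  moreover have "vkron (vkp u r) (M *\<^sub>v u) \<in> carrier_vec (p^r*p)"
    using M z u by (intro vkron_carrier) auto
  ultimately show ?case
    by (simp add: vkron_uminus_left vkron_uminus_right neg_add_vec)
qed

lemma lmi_pd:
  fixes Q L Lbar P :: "real mat"
  assumes Q: "Q \<in> carrier_mat p n" and L: "L \<in> carrier_mat n n" and Lbar: "Lbar \<in> carrier_mat p p"
    and QL: "Q * L = Lbar * Q"
    and P: "P \<in> carrier_mat (n^r) (n^r)" and Psym: "transpose_mat P = P"
    and lmi: "neg_def (p ^ r)
           (- (kron_pow Q r * kron_sum_pow L r * P * transpose_mat (kron_pow Q r))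
            - kron_pow Q r * P * transpose_mat (kron_sum_pow L r) * transpose_mat (kron_pow Q r))"
    and w: "w \<in> carrier_vec (p^r)" "w \<noteq> 0\<^sub>v (p^r)"
  shows "w \<bullet> ((kron_sum_pow Lbar r * (kron_pow Q r * P * transpose_mat (kron_pow Q r))) *\<^sub>v w) > 0"
proof -
  define K where "K = kron_pow Q r"
  define S where "S = kron_sum_pow L r"
  define Lb where "Lb = kron_sum_pow Lbar r"
  define Pb where "Pb = K * P * transpose_mat K"
  have K: "K \<in> carrier_mat (p^r) (n^r)" unfolding K_def by (rule kron_pow_carrier[OF Q])
  have S: "S \<in> carrier_mat (n^r) (n^r)" unfolding S_def by (rule kron_sum_pow_carrier[OF L])
  have Lb: "Lb \<in> carrier_mat (p^r) (p^r)" unfolding Lb_def by (rule kron_sum_pow_carrier[OF Lbar])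
  have Pb: "Pb \<in> carrier_mat (p^r) (p^r)" unfolding Pb_def using K P by auto
  have KS: "K * S = Lb * K" unfolding K_def S_def Lb_def by (rule kron_comm[OF Q L Lbar QL])
  have A1: "K * S * P * transpose_mat K = Lb * Pb"
  proof -
    have "K * S * P * transpose_mat K = Lb * K * P * transpose_mat K" by (simp add: KS)
    also have "\<dots> = Lb * (K * P * transpose_mat K)" using Lb K P by (simp add: assoc_mult_mat[of _ "p^r" "p^r" _ "n^r"])
    finally show ?thesis unfolding Pb_def .
  qed
  have A2: "K * P * transpose_mat S * transpose_mat K = Pb * transpose_mat Lb"
  proof -
    have "K * P * transpose_mat S * transpose_mat K = (K * P) * (transpose_mat S * transpose_mat K)"
      using K P S by (intro assoc_mult_mat[of _ "p^r" "n^r" _ "n^r" _ "p^r"]) auto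
    also have "transpose_mat S * transpose_mat K = transpose_mat (K * S)"
      using K S by (simp add: transpose_mult[of K "p^r" "n^r" S])
    also have "\<dots> = transpose_mat K * transpose_mat Lb"
      unfolding KS using K Lb by (simp add: transpose_mult[of Lb "p^r" "p^r" K])
    also have "(K * P) * (transpose_mat K * transpose_mat Lb) = Pb * transpose_mat Lb"
      unfolding Pb_def using K P Lb by (intro assoc_mult_mat[symmetric, of _ "p^r" "n^r" _ "p^r" _ "p^r"]) auto
    finally show ?thesis .
  qed
  have X: "neg_def (p^r) (- (Lb * Pb) - Pb * transpose_mat Lb)"
    using lmi unfolding K_def[symmetric] S_def[symmetric] A1 A2 .
  then have neg: "w \<bullet> ((- (Lb * Pb) - Pb * transpose_mat Lb) *\<^sub>v w) < 0"
    using w unfolding neg_def_def by auto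
  have LP: "Lb * Pb \<in> carrier_mat (p^r) (p^r)" using Lb Pb by auto
  have PL: "Pb * transpose_mat Lb \<in> carrier_mat (p^r) (p^r)" using Lb Pb by auto
  have e1: "(- (Lb * Pb) - Pb * transpose_mat Lb) *\<^sub>v w = - ((Lb * Pb) *\<^sub>v w) - (Pb * transpose_mat Lb) *\<^sub>v w"
  proof -
    have "(- (Lb * Pb) - Pb * transpose_mat Lb) *\<^sub>v w = (- (Lb * Pb)) *\<^sub>v w - (Pb * transpose_mat Lb) *\<^sub>v w"
      using LP PL w by (intro minus_mult_distrib_mat_vec[of _ "p^r" "p^r"]) auto
    also have "(- (Lb * Pb)) *\<^sub>v w = - ((Lb * Pb) *\<^sub>v w)" using LP w by (intro uminus_mult_mat_vec) auto
    finally show ?thesis .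
  qed
  have v1: "(Lb * Pb) *\<^sub>v w \<in> carrier_vec (p^r)" using LP w by auto
  have v2: "(Pb * transpose_mat Lb) *\<^sub>v w \<in> carrier_vec (p^r)" using PL w by auto
  have e2: "w \<bullet> (- ((Lb * Pb) *\<^sub>v w) - (Pb * transpose_mat Lb) *\<^sub>v w) = - (w \<bullet> ((Lb * Pb) *\<^sub>v w)) - w \<bullet> ((Pb * transpose_mat Lb) *\<^sub>v w)"
  proof -
    have "w \<bullet> (- ((Lb * Pb) *\<^sub>v w) - (Pb * transpose_mat Lb) *\<^sub>v w) = w \<bullet> (- ((Lb * Pb) *\<^sub>v w)) - w \<bullet> ((Pb * transpose_mat Lb) *\<^sub>v w)"
      using v1 v2 w by (intro scalar_prod_minus_distrib) auto
    moreover have "w \<bullet> (- ((Lb * Pb) *\<^sub>v w)) = - (w \<bullet> ((Lb * Pb) *\<^sub>v w))"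
      using v1 w Lb by (intro scalar_prod_uminus_right) (simp add: carrier_vecD)
    ultimately show ?thesis by simp
  qed
  have sym: "transpose_mat Pb = Pb"
  proof -
    have "transpose_mat Pb = transpose_mat (K * (P * transpose_mat K))"
      unfolding Pb_def using K P by (simp add: assoc_mult_mat[of _ "p^r" "n^r" _ "n^r" _ "p^r"])
    also have "\<dots> = transpose_mat (P * transpose_mat K) * transpose_mat K"
      using K P by (intro transpose_mult[of _ "p^r" "n^r"]) auto
    also have "transpose_mat (P * transpose_mat K) = K * transpose_mat P"
      using K P by (simp add: transpose_mult[of P "n^r" "n^r"])
    also have "K * transpose_mat P * transpose_mat K = Pb" unfolding Pb_def Psym ..
    finally show ?thesis .
  qed
  have e3: "w \<bullet> ((Pb * transpose_mat Lb) *\<^sub>v w) = w \<bullet> ((Lb * Pb) *\<^sub>v w)"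
  proof -
    have "w \<bullet> ((Pb * transpose_mat Lb) *\<^sub>v w) = w \<bullet> (Pb *\<^sub>v (transpose_mat Lb *\<^sub>v w))"
      using Pb Lb w by simp
    also have "\<dots> = (transpose_mat Pb *\<^sub>v w) \<bullet> (transpose_mat Lb *\<^sub>v w)"
      using Pb Lb w by (simp add: transpose_vec_mult_scalar[of Pb "p^r" "p^r"])
    also have "\<dots> = (transpose_mat Lb *\<^sub>v w) \<bullet> (Pb *\<^sub>v w)"
      using Pb Lb w sym by (simp add: comm_scalar_prod[of _ "p^r"])
    also have "\<dots> = w \<bullet> (Lb *\<^sub>v (Pb *\<^sub>v w))"
      using Pb Lb w by (simp add: transpose_vec_mult_scalar[of Lb "p^r" "p^r"])
    also have "\<dots> = w \<bullet> ((Lb * Pb) *\<^sub>v w)" using Pb Lb w by simp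
    finally show ?thesis .
  qed
  show ?thesis using neg e1 e2 e3 unfolding Lb_def[symmetric] K_def[symmetric] Pb_def[symmetric] by simp
qed
lemma exp_decay_lim: "(lam::real) > 0 \<Longrightarrow> ((\<lambda>t. exp (- lam * t)) \<longlongrightarrow> 0) at_top"
  by real_asymp

lemma Pb_pd:
  fixes Q P :: "real mat"
  assumes Q: "Q \<in> carrier_mat p n" and QQ: "Q * transpose_mat Q = 1\<^sub>m p" and P: "pos_def (n ^ r) P"
  shows "\<forall>w \<in> carrier_vec (p^r). w \<noteq> 0\<^sub>v (p^r) \<longrightarrow> w \<bullet> ((kron_pow Q r * P * transpose_mat (kron_pow Q r)) *\<^sub>v w) > 0"
proof (intro ballI impI)
  fix w :: "real Matrix.vec" assume w: "w \<in> carrier_vec (p^r)" and w0: "w \<noteq> 0\<^sub>v (p^r)"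
  define K where "K = kron_pow Q r"
  have K: "K \<in> carrier_mat (p^r) (n^r)" unfolding K_def by (rule kron_pow_carrier[OF Q])
  have KK: "K * transpose_mat K = 1\<^sub>m (p^r)" unfolding K_def by (rule kron_orth[OF Q QQ])
  have Pc: "P \<in> carrier_mat (n^r) (n^r)" using P unfolding pos_def_def by auto
  define y where "y = transpose_mat K *\<^sub>v w"
  have y: "y \<in> carrier_vec (n^r)" unfolding y_def using K w by auto
  have "K *\<^sub>v y = w" unfolding y_def using K w KK by (simp add: assoc_mult_mat_vec[symmetric, of _ "p^r" "n^r"])
  then have y0: "y \<noteq> 0\<^sub>v (n^r)" using w0 K by auto
  have "(K * P * transpose_mat K) *\<^sub>v w = (K * P) *\<^sub>v y"
    unfolding y_def by (rule assoc_mult_mat_vec[of _ "p^r" "n^r" _ "p^r"]) (use K Pc w in auto)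
  also have "(K * P) *\<^sub>v y = K *\<^sub>v (P *\<^sub>v y)"
    by (rule assoc_mult_mat_vec[of _ "p^r" "n^r" _ "n^r"]) (use K Pc y in auto)
  finally have "w \<bullet> ((K * P * transpose_mat K) *\<^sub>v w) = w \<bullet> (K *\<^sub>v (P *\<^sub>v y))" by simp
  also have "\<dots> = y \<bullet> (P *\<^sub>v y)"
    unfolding y_def using K Pc w y[unfolded y_def] by (simp add: transpose_vec_mult_scalar[of K "p^r" "n^r"])
  also have "\<dots> > 0" using P y y0 unfolding pos_def_def by auto
  finally show "w \<bullet> ((kron_pow Q r * P * transpose_mat (kron_pow Q r)) *\<^sub>v w) > 0" unfolding K_def .
qed

lemma Pb_sym:
  fixes Q P :: "real mat"
  assumes Q: "Q \<in> carrier_mat p n" and P: "pos_def (n ^ r) P"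
  shows "transpose_mat (kron_pow Q r * P * transpose_mat (kron_pow Q r)) = kron_pow Q r * P * transpose_mat (kron_pow Q r)"
proof -
  define K where "K = kron_pow Q r"
  have K: "K \<in> carrier_mat (p^r) (n^r)" unfolding K_def by (rule kron_pow_carrier[OF Q])
  have Pc: "P \<in> carrier_mat (n^r) (n^r)" and Psym: "transpose_mat P = P" using P unfolding pos_def_def symmetric_mat_def by auto
  have "transpose_mat (K * P * transpose_mat K) = transpose_mat (K * (P * transpose_mat K))"
    using K Pc by (simp add: assoc_mult_mat[of _ "p^r" "n^r" _ "n^r" _ "p^r"])
  also have "\<dots> = transpose_mat (P * transpose_mat K) * transpose_mat K"
    using K Pc by (intro transpose_mult[of _ "p^r" "n^r"]) auto
  also have "transpose_mat (P * transpose_mat K) = K * transpose_mat P"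
    using K Pc by (simp add: transpose_mult[of P "n^r" "n^r"])
  also have "K * transpose_mat P * transpose_mat K = K * P * transpose_mat K" unfolding Psym ..
  finally show ?thesis unfolding K_def .
qed

lemma inv_exists:
  fixes A :: "real mat"
  assumes A: "A \<in> carrier_mat N N" and pd: "\<forall>w \<in> carrier_vec N. w \<noteq> 0\<^sub>v N \<longrightarrow> w \<bullet> (A *\<^sub>v w) > 0"
  shows "\<exists>W. W \<in> carrier_mat N N \<and> W * A = 1\<^sub>m N \<and> A * W = 1\<^sub>m N"
proof -
  have "det A \<noteq> 0"
  proof
    assume "det A = 0"
    then obtain v where v: "v \<in> carrier_vec N" "v \<noteq> 0\<^sub>v N" "A *\<^sub>v v = 0\<^sub>v N"
      using det_0_iff_vec_prod_zero[OF A] by auto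
    then have "v \<bullet> (A *\<^sub>v v) = 0" by simp
    with pd v show False by auto
  qed
  from det_non_zero_imp_unit[OF A this, of undefined]
  show ?thesis unfolding Units_def ring_mat_def by auto
qed

lemma inv_sym:
  fixes A W :: "real mat"
  assumes A: "A \<in> carrier_mat N N" and W: "W \<in> carrier_mat N N" and WA: "W * A = 1\<^sub>m N" and AW: "A * W = 1\<^sub>m N"
    and As: "transpose_mat A = A"
  shows "transpose_mat W = W"
proof -
  have "transpose_mat W * A = transpose_mat (A * W)"
    using A W As by (simp add: transpose_mult[of A N N W N])
  also have "\<dots> = 1\<^sub>m N" using AW by simp
  finally have e: "transpose_mat W * A = 1\<^sub>m N" .
  have "transpose_mat W = transpose_mat W * (A * W)" using AW W by simp
  also have "\<dots> = (transpose_mat W * A) * W" using A W by (simp add: assoc_mult_mat[of _ N N _ N _ N])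
  also have "\<dots> = W" using e W by simp
  finally show ?thesis .
qed

fun idx :: "nat \<Rightarrow> nat \<Rightarrow> nat \<Rightarrow> nat" where
  "idx p k 0 = 0"
| "idx p k (Suc r) = idx p k r * p + k"

lemma idx_prop:
  assumes k: "k < p" and u: "dim_vec u = p"
  shows "idx p k r < p ^ r \<and> vkp u r $ (idx p k r) = (u $ k) ^ r"
proof (induction r)
  case 0
  then show ?case by simp
next
  case (Suc r)
  have lt: "idx p k r * p + k < p ^ r * p" using Suc.IH k lt_mult_aux[of "idx p k r" "p^r" k p] by simp
  have dm: "(idx p k r * p + k) div p = idx p k r" "(idx p k r * p + k) mod p = k" using k by auto
  show ?case using lt dm u Suc.IH by (simp add: vkron_index mult.commute)
qed

lemma vkp_cont:
  fixes u :: "real \<Rightarrow> real Matrix.vec"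
  assumes uc: "\<And>s. u s \<in> carrier_vec p"
    and cont: "\<And>k. k < p \<Longrightarrow> continuous_on S (\<lambda>s. u s $ k)"
  shows "i < p ^ r \<Longrightarrow> continuous_on S (\<lambda>s. vkp (u s) r $ i)"
proof (induction r arbitrary: i)
  case 0
  then show ?case by simp
next
  case (Suc r)
  have dimu: "dim_vec (u s) = p" for s using uc[of s] by auto
  have i: "i < p ^ r * p" using Suc.prems by (simp add: mult.commute)
  have b: "i div p < p ^ r" "i mod p < p" using dm_bounds[OF i] by auto
  have f: "(\<lambda>s. vkp (u s) (Suc r) $ i) = (\<lambda>s. vkp (u s) r $ (i div p) * u s $ (i mod p))"
    using i dimu by (auto simp: vkron_index)
  show ?case unfolding f by (intro continuous_intros Suc.IH b cont)
qed

lemma mult_mat_vec_uminus_right: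
  fixes A :: "real mat"
  assumes A: "A \<in> carrier_mat nr nc" and y: "y \<in> carrier_vec nc"
  shows "A *\<^sub>v (- y) = - (A *\<^sub>v y)"
  by (intro eq_vecI) (use A y in \<open>auto simp: scalar_prod_def atLeast0LessThan sum_negf[symmetric]\<close>)

theorem corollary6:
  fixes n r :: nat and Ls :: "real mat list" and Q P :: "real mat"
  assumes lap: "\<forall>L \<in> set Ls. L \<in> carrier_mat n n \<and> is_signed_laplacian n L"
      and bal: "\<forall>L \<in> set Ls. weight_balanced n L"
      and eep: "\<forall>L \<in> set Ls. EEP (- L)"
      and Qdim: "Q \<in> carrier_mat (n - 1) n"
      and QQt: "Q * transpose_mat Q = 1\<^sub>m (n - 1)"
      and Q1: "Q *\<^sub>v ones_vec n = 0\<^sub>v (n - 1)"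
      and r: "r \<ge> 1"
      and P: "pos_def (n ^ r) P"
      and lmi: "\<forall>L \<in> set Ls.
         neg_def ((n - 1) ^ r)
           (- (kron_pow Q r * kron_sum_pow L r * P * transpose_mat (kron_pow Q r))
            - kron_pow Q r * P * transpose_mat (kron_sum_pow L r) * transpose_mat (kron_pow Q r))"
  shows "consensus_set n Ls"
  unfolding consensus_set_def
proof (intro allI impI)
  fix \<sigma> :: "real \<Rightarrow> nat" and x :: "real \<Rightarrow> real Matrix.vec"
  assume sw: "switching_signal (length Ls) \<sigma>" and sol: "switched_solution n Ls \<sigma> x"
  have sig: "\<And>t. t \<ge> 0 \<Longrightarrow> \<sigma> t < length Ls" using sw unfolding switching_signal_def by auto
  have xc: "\<And>t. t \<ge> 0 \<Longrightarrow> x t \<in> carrier_vec n" and contx: "\<And>i. i < n \<Longrightarrow> continuous_on {0..} (\<lambda>t. x t $ i)"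
    using sol unfolding switched_solution_def by auto
  obtain D where D: "\<forall>T. finite (D \<inter> {0..T})"
    and derx: "\<And>t i. t \<ge> 0 \<Longrightarrow> t \<notin> D \<Longrightarrow> i < n \<Longrightarrow>
        ((\<lambda>s. x s $ i) has_real_derivative ((- (Ls ! \<sigma> t)) *\<^sub>v x t) $ i) (at t within {0..})"
    using sol unfolding switched_solution_def by blast
  show "\<exists>\<alpha>. \<forall>i<n. ((\<lambda>t. x t $ i) \<longlongrightarrow> \<alpha>) at_top"
  proof (cases "n = 0")
    case True
    then show ?thesis by simp
  next
    case False
    then have n1: "n \<ge> 1" by simp
    define p where "p = n - 1"
    define Lt where "Lt t = Ls ! \<sigma> t" for t
    have Lt: "\<And>t. t \<ge> 0 \<Longrightarrow> Lt t \<in> set Ls" unfolding Lt_def using sig by auto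
    define Lbar where "Lbar L = Q * L * transpose_mat Q" for L
    define K where "K = kron_pow Q r"
    define Pb where "Pb = K * P * transpose_mat K"
    define N where "N = p ^ r"
    have Qc: "Q \<in> carrier_mat p n" using Qdim unfolding p_def .
    have QQ: "Q * transpose_mat Q = 1\<^sub>m p" using QQt unfolding p_def .
    have Pc: "P \<in> carrier_mat (n^r) (n^r)" using P unfolding pos_def_def by auto
    have Kc: "K \<in> carrier_mat N (n^r)" unfolding K_def N_def by (rule kron_pow_carrier[OF Qc])
    have Pbc: "Pb \<in> carrier_mat N N" unfolding Pb_def using Kc Pc by auto
    have Lc: "\<And>L. L \<in> set Ls \<Longrightarrow> L \<in> carrier_mat n n" using lap by auto
    have Lbc: "\<And>L. L \<in> set Ls \<Longrightarrow> Lbar L \<in> carrier_mat p p" unfolding Lbar_def using Qc Lc by auto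
    have QL: "\<And>L. L \<in> set Ls \<Longrightarrow> Q * L = Lbar L * Q"
      unfolding Lbar_def using QL_comm[OF Qdim QQt Q1 n1] lap by (auto simp: p_def)
    define Lb where "Lb L = kron_sum_pow (Lbar L) r" for L
    have Lbbc: "\<And>L. L \<in> set Ls \<Longrightarrow> Lb L \<in> carrier_mat N N"
      unfolding Lb_def N_def using Lbc by (auto intro: kron_sum_pow_carrier)
    have pdL: "\<And>L. L \<in> set Ls \<Longrightarrow> \<forall>w \<in> carrier_vec N. w \<noteq> 0\<^sub>v N \<longrightarrow> w \<bullet> ((Lb L * Pb) *\<^sub>v w) > 0"
    proof (intro ballI impI)
      fix L and w :: "real Matrix.vec" assume L: "L \<in> set Ls" and w: "w \<in> carrier_vec N" "w \<noteq> 0\<^sub>v N"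
      have Psym: "transpose_mat P = P" using P unfolding pos_def_def symmetric_mat_def by auto
      have lm: "neg_def (p ^ r)
           (- (kron_pow Q r * kron_sum_pow L r * P * transpose_mat (kron_pow Q r))
            - kron_pow Q r * P * transpose_mat (kron_sum_pow L r) * transpose_mat (kron_pow Q r))"
        using lmi L unfolding p_def by blast
      have w': "w \<in> carrier_vec (p^r)" "w \<noteq> 0\<^sub>v (p^r)" using w unfolding N_def by auto
      show "w \<bullet> ((Lb L * Pb) *\<^sub>v w) > 0"
        unfolding Lb_def Pb_def K_def
        by (rule lmi_pd[OF Qc Lc[OF L] Lbc[OF L] QL[OF L] Pc Psym lm w'])
    qed
    have "\<forall>L \<in> set Ls. \<exists>c>0. \<forall>w \<in> carrier_vec N. w \<bullet> ((Lb L * Pb) *\<^sub>v w) \<ge> c * (w \<bullet> w)"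
    proof
      fix L assume L: "L \<in> set Ls"
      have "Lb L * Pb \<in> carrier_mat N N" using Lbbc[OF L] Pbc by (rule mult_carrier_mat)
      from pd_lower[OF this pdL[OF L]] show "\<exists>c>0. \<forall>w \<in> carrier_vec N. w \<bullet> ((Lb L * Pb) *\<^sub>v w) \<ge> c * (w \<bullet> w)" .
    qed
    then obtain cf where cf: "\<And>L. L \<in> set Ls \<Longrightarrow> cf L > 0 \<and> (\<forall>w \<in> carrier_vec N. w \<bullet> ((Lb L * Pb) *\<^sub>v w) \<ge> cf L * (w \<bullet> w))"
      by metis
    have Lsne: "set Ls \<noteq> {}" using sig[of 0] by auto
    define c where "c = Min (cf ` set Ls)"
    have cpos: "c > 0" unfolding c_def using Lsne cf by (simp add: Min_gr_iff)
    have cle: "\<And>L. L \<in> set Ls \<Longrightarrow> c \<le> cf L" unfolding c_def by (intro Min_le) auto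
    have cb: "\<And>L w. L \<in> set Ls \<Longrightarrow> w \<in> carrier_vec N \<Longrightarrow> w \<bullet> ((Lb L * Pb) *\<^sub>v w) \<ge> c * (w \<bullet> w)"
    proof -
      fix L and w :: "real Matrix.vec" assume L: "L \<in> set Ls" and w: "w \<in> carrier_vec N"
      have "w \<bullet> w \<ge> 0" using w by (simp add: sq_sum[OF w] sum_nonneg)
      then have "c * (w \<bullet> w) \<le> cf L * (w \<bullet> w)" using cle[OF L] by (intro mult_right_mono)
      also have "\<dots> \<le> w \<bullet> ((Lb L * Pb) *\<^sub>v w)" using cf[OF L] w by auto
      finally show "w \<bullet> ((Lb L * Pb) *\<^sub>v w) \<ge> c * (w \<bullet> w)" .
    qed
    have Pbpd: "\<forall>w \<in> carrier_vec N. w \<noteq> 0\<^sub>v N \<longrightarrow> w \<bullet> (Pb *\<^sub>v w) > 0"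
      using Pb_pd[OF Qc QQ P] unfolding Pb_def K_def N_def .
    have Pbsym: "transpose_mat Pb = Pb" using Pb_sym[OF Qc P] unfolding Pb_def K_def .
    obtain W where Wc: "W \<in> carrier_mat N N" and WP: "W * Pb = 1\<^sub>m N" and PW: "Pb * W = 1\<^sub>m N"
      using inv_exists[OF Pbc Pbpd] by blast
    have Wsym: "transpose_mat W = W" by (rule inv_sym[OF Pbc Wc WP PW Pbsym])
    obtain C where Cpos: "C > 0" and Cb: "\<forall>v \<in> carrier_vec N. \<bar>v \<bullet> (Pb *\<^sub>v v)\<bar> \<le> C * (v \<bullet> v)"
      using quad_upper[OF Pbc] by blast
    obtain c0 where c0pos: "c0 > 0" and c0b: "\<forall>v \<in> carrier_vec N. v \<bullet> (Pb *\<^sub>v v) \<ge> c0 * (v \<bullet> v)"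
      using pd_lower[OF Pbc Pbpd] by blast
    define u where "u s = Q *\<^sub>v x s" for s
    have uc: "\<And>s. u s \<in> carrier_vec p" unfolding u_def using Qc by (metis carrier_matD(1) carrier_vecI dim_mult_mat_vec)
    have uk: "\<And>s k. s \<ge> 0 \<Longrightarrow> k < p \<Longrightarrow> u s $ k = (\<Sum>j<n. Q $$ (k,j) * x s $ j)"
    proof -
      fix s :: real and k assume s: "s \<ge> 0" and k: "k < p"
      have "dim_vec (x s) = n" using xc[OF s] by auto
      then show "u s $ k = (\<Sum>j<n. Q $$ (k,j) * x s $ j)"
        unfolding u_def using Qc k by (auto simp: scalar_prod_def atLeast0LessThan row_def)
    qed
    define du where "du t = Q *\<^sub>v ((- (Lt t)) *\<^sub>v x t)" for t
    have duc: "\<And>t. du t \<in> carrier_vec p" unfolding du_def using Qc by (metis carrier_matD(1) carrier_vecI dim_mult_mat_vec)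
    have duk: "\<And>t k. t \<ge> 0 \<Longrightarrow> k < p \<Longrightarrow> du t $ k = (\<Sum>j<n. Q $$ (k,j) * ((- (Lt t)) *\<^sub>v x t) $ j)"
    proof -
      fix t :: real and k assume t: "t \<ge> 0" and k: "k < p"
      have "dim_vec ((- (Lt t)) *\<^sub>v x t) = n" using Lc[OF Lt[OF t]] by auto
      then show "du t $ k = (\<Sum>j<n. Q $$ (k,j) * ((- (Lt t)) *\<^sub>v x t) $ j)"
        unfolding du_def using Qc k by (auto simp: scalar_prod_def atLeast0LessThan row_def)
    qed
    have deru: "\<And>t k. t \<ge> 0 \<Longrightarrow> t \<notin> D \<Longrightarrow> k < p \<Longrightarrow>
        ((\<lambda>s. u s $ k) has_real_derivative du t $ k) (at t within {0..})"
    proof -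
      fix t :: real and k assume t: "t \<ge> 0" "t \<notin> D" and k: "k < p"
      have "((\<lambda>s. \<Sum>j<n. Q $$ (k,j) * x s $ j) has_real_derivative
          (\<Sum>j<n. Q $$ (k,j) * ((- (Lt t)) *\<^sub>v x t) $ j)) (at t within {0..})"
        unfolding Lt_def by (intro DERIV_sum DERIV_cmult derx t) auto
      then show "((\<lambda>s. u s $ k) has_real_derivative du t $ k) (at t within {0..})"
        unfolding duk[OF t(1) k]
        by (rule has_field_derivative_transform_within[of _ _ _ _ 1]) (use t k uk in auto)
    qed
    have dueq: "\<And>t. t \<ge> 0 \<Longrightarrow> du t = - (Lbar (Lt t) *\<^sub>v u t)"
    proof -
      fix t :: real assume t: "t \<ge> 0"
      have L: "Lt t \<in> carrier_mat n n" using Lc Lt t by auto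
      have "du t = Q *\<^sub>v (- (Lt t *\<^sub>v x t))" unfolding du_def using L xc[OF t] by simp
      also have "\<dots> = - (Q *\<^sub>v (Lt t *\<^sub>v x t))"
        by (rule mult_mat_vec_uminus_right[OF Qc]) (use L xc[OF t] in auto)
      also have "Q *\<^sub>v (Lt t *\<^sub>v x t) = (Q * Lt t) *\<^sub>v x t" using Qc L xc[OF t] by simp
      also have "\<dots> = (Lbar (Lt t) * Q) *\<^sub>v x t" using QL Lt t by simp
      also have "\<dots> = Lbar (Lt t) *\<^sub>v u t" unfolding u_def using Qc Lbc[OF Lt[OF t]] xc[OF t] by simp
      finally show "du t = - (Lbar (Lt t) *\<^sub>v u t)" .
    qed
    define z where "z s = vkp (u s) r" for s
    have zc: "\<And>s. z s \<in> carrier_vec N" unfolding z_def N_def by (rule vkp_carrier[OF uc])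
    define dz where "dz t = vkpd (u t) (du t) r" for t
    have dzeq: "\<And>t. t \<ge> 0 \<Longrightarrow> dz t = - (Lb (Lt t) *\<^sub>v z t)"
      unfolding dz_def z_def Lb_def dueq
      by (rule vkpd_eq[OF Lbc uc]) (use Lt in auto)
    have dzc: "\<And>t. t \<ge> 0 \<Longrightarrow> dz t \<in> carrier_vec N"
      using dzeq Lbbc Lt zc by (metis carrier_matD(1) carrier_vecI dim_mult_mat_vec index_uminus_vec(2))
    have derz: "\<And>t i. t \<ge> 0 \<Longrightarrow> t \<notin> D \<Longrightarrow> i < N \<Longrightarrow>
        ((\<lambda>s. z s $ i) has_real_derivative dz t $ i) (at t within {0..})"
      unfolding z_def dz_def N_def by (rule vkp_deriv[OF uc duc deru])
    define V where "V s = z s \<bullet> (W *\<^sub>v z s)" for s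
    define V' where "V' t = dz t \<bullet> (W *\<^sub>v z t) + z t \<bullet> (W *\<^sub>v dz t)" for t
    have derV: "\<And>t. t > 0 \<Longrightarrow> t \<notin> D \<Longrightarrow> (V has_real_derivative V' t) (at t within {0..})"
      unfolding V_def V'_def by (rule quad_deriv[OF Wc zc dzc derz]) auto
    have contu: "\<And>k. k < p \<Longrightarrow> continuous_on {0..} (\<lambda>s. u s $ k)"
    proof -
      fix k assume k: "k < p"
      have "continuous_on {0..} (\<lambda>s. \<Sum>j<n. Q $$ (k,j) * x s $ j)"
        by (intro continuous_intros contx) auto
      then show "continuous_on {0..} (\<lambda>s. u s $ k)"
        by (rule continuous_on_cong[THEN iffD1, rotated 2]) (use uk k in auto)
    qed
    have contz: "\<And>i. i < N \<Longrightarrow> continuous_on {0..} (\<lambda>s. z s $ i)"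
      unfolding z_def N_def by (rule vkp_cont[OF uc contu])
    have contV: "continuous_on {0..} V"
    proof -
      have "V = (\<lambda>s. \<Sum>i<N. \<Sum>j<N. W $$ (i,j) * (z s $ i * z s $ j))"
        unfolding V_def using bilin_sum[OF Wc zc zc] by auto
      moreover have "continuous_on {0..} (\<lambda>s. \<Sum>i<N. \<Sum>j<N. W $$ (i,j) * (z s $ i * z s $ j))"
        by (intro continuous_intros contz) auto
      ultimately show ?thesis by simp
    qed
    define q where "q s = W *\<^sub>v z s" for s
    have qc: "\<And>s. q s \<in> carrier_vec N" unfolding q_def using Wc zc by auto
    have zq: "\<And>s. z s = Pb *\<^sub>v q s"
      unfolding q_def using Pbc Wc zc PW by (simp add: assoc_mult_mat_vec[symmetric, of _ N N _ N])
    have Vq: "\<And>s. V s = q s \<bullet> (Pb *\<^sub>v q s)"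
    proof -
      fix s
      have "V s = (Pb *\<^sub>v q s) \<bullet> q s" unfolding V_def q_def[symmetric] using zq by simp
      also have "\<dots> = q s \<bullet> (Pb *\<^sub>v q s)" using Pbc qc by (intro comm_scalar_prod[of _ N]) auto
      finally show "V s = q s \<bullet> (Pb *\<^sub>v q s)" .
    qed
    have qq0: "\<And>s. q s \<bullet> q s \<ge> 0"
    proof -
      fix s show "q s \<bullet> q s \<ge> 0" unfolding sq_sum[OF qc[of s]] by (intro sum_nonneg) auto
    qed
    have Vlow: "\<And>s. V s \<ge> c0 * (q s \<bullet> q s)" using c0b qc Vq by auto
    have Vup: "\<And>s. V s \<le> C * (q s \<bullet> q s)" using Cb qc Vq by (metis abs_le_iff)
    define lam where "lam = 2 * c / C"
    have lampos: "lam > 0" unfolding lam_def using cpos Cpos by simp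
    have V'le: "\<And>t. t > 0 \<Longrightarrow> t \<notin> D \<Longrightarrow> V' t \<le> - lam * V t"
    proof -
      fix t :: real assume t: "t > 0" "t \<notin> D"
      have t0: "t \<ge> 0" using t by simp
      have L: "Lt t \<in> set Ls" using Lt t0 .
      have e1: "z t \<bullet> (W *\<^sub>v dz t) = q t \<bullet> dz t"
      proof -
        have "z t \<bullet> (W *\<^sub>v dz t) = (transpose_mat W *\<^sub>v z t) \<bullet> dz t"
          using Wc zc dzc[OF t0] by (simp add: transpose_vec_mult_scalar[of W N N])
        then show ?thesis unfolding Wsym q_def .
      qed
      have e2: "dz t \<bullet> (W *\<^sub>v z t) = q t \<bullet> dz t"
        unfolding q_def[symmetric] using qc dzc[OF t0] by (intro comm_scalar_prod[of _ N]) auto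
      have e3: "q t \<bullet> dz t = - (q t \<bullet> ((Lb (Lt t) * Pb) *\<^sub>v q t))"
      proof -
        have "q t \<bullet> dz t = q t \<bullet> (- (Lb (Lt t) *\<^sub>v z t))" using dzeq[OF t0] by simp
        also have "\<dots> = - (q t \<bullet> (Lb (Lt t) *\<^sub>v z t))"
          using qc Lbbc[OF L] zc by (intro scalar_prod_uminus_right) (auto simp: carrier_vecD)
        also have "Lb (Lt t) *\<^sub>v z t = (Lb (Lt t) * Pb) *\<^sub>v q t"
          using zq Lbbc[OF L] Pbc qc by (simp add: assoc_mult_mat_vec[of _ N N _ N])
        finally show ?thesis .
      qed
      have "V' t = - 2 * (q t \<bullet> ((Lb (Lt t) * Pb) *\<^sub>v q t))"
        unfolding V'_def e1 e2 e3 by simp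
      also have "\<dots> \<le> - 2 * (c * (q t \<bullet> q t))" using cb[OF L qc] by simp
      also have "\<dots> \<le> - lam * V t"
      proof -
        have "lam * V t \<le> lam * (C * (q t \<bullet> q t))" using lampos Vup by (intro mult_left_mono) auto
        also have "\<dots> = 2 * (c * (q t \<bullet> q t))" unfolding lam_def using Cpos by simp
        finally show ?thesis by simp
      qed
      finally show "V' t \<le> - lam * V t" .
    qed
    have Vdec: "\<And>t. t \<ge> 0 \<Longrightarrow> V t \<le> V 0 * exp (- lam * t)"
      by (rule decay[OF contV D derV V'le]) auto
    have bnd: "((\<lambda>t. V 0 / c0 * exp (- lam * t)) \<longlongrightarrow> 0) at_top"
      using tendsto_mult[OF tendsto_const exp_decay_lim[OF lampos], of "V 0 / c0"] by simp
    have qqb: "\<And>t. t \<ge> 0 \<Longrightarrow> q t \<bullet> q t \<le> V 0 / c0 * exp (- lam * t)"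
    proof -
      fix t :: real assume t: "t \<ge> 0"
      have "c0 * (q t \<bullet> q t) \<le> V 0 * exp (- lam * t)" using Vlow[of t] Vdec[OF t] by linarith
      then show "q t \<bullet> q t \<le> V 0 / c0 * exp (- lam * t)" using c0pos by (simp add: field_simps)
    qed
    have qlim: "\<And>i. i < N \<Longrightarrow> ((\<lambda>t. q t $ i) \<longlongrightarrow> 0) at_top"
    proof -
      fix i assume i: "i < N"
      have sqle: "(q t $ i)^2 \<le> q t \<bullet> q t" for t
        unfolding sq_sum[OF qc[of t]] using i by (intro member_le_sum) auto
      have "((\<lambda>t. (q t $ i)^2) \<longlongrightarrow> 0) at_top"
      proof (rule real_tendsto_sandwich[OF _ _ tendsto_const bnd])
        show "\<forall>\<^sub>F t in at_top. 0 \<le> (q t $ i)^2" by simp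
        show "\<forall>\<^sub>F t in at_top. (q t $ i)^2 \<le> V 0 / c0 * exp (- lam * t)"
          using eventually_ge_at_top[of "0::real"] by eventually_elim (use sqle qqb order_trans in blast)
      qed
      from tendsto_real_sqrt[OF this] have "((\<lambda>t. \<bar>q t $ i\<bar>) \<longlongrightarrow> 0) at_top" by simp
      then show "((\<lambda>t. q t $ i) \<longlongrightarrow> 0) at_top" by (simp add: tendsto_rabs_zero_iff)
    qed
    have zlim: "\<And>i. i < N \<Longrightarrow> ((\<lambda>t. z t $ i) \<longlongrightarrow> 0) at_top"
    proof -
      fix i assume i: "i < N"
      have "z t $ i = (\<Sum>j<N. Pb $$ (i,j) * q t $ j)" for t
        using zq[of t] Pbc qc[of t] i by (simp add: scalar_prod_def atLeast0LessThan row_def)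
      moreover have "((\<lambda>t. \<Sum>j<N. Pb $$ (i,j) * q t $ j) \<longlongrightarrow> (\<Sum>j<N. Pb $$ (i,j) * 0)) at_top"
        by (intro tendsto_intros qlim) auto
      ultimately show "((\<lambda>t. z t $ i) \<longlongrightarrow> 0) at_top" by simp
    qed
    have r0: "r > 0" using r by simp
    have ulim: "\<And>k. k < p \<Longrightarrow> ((\<lambda>t. u t $ k) \<longlongrightarrow> 0) at_top"
    proof -
      fix k assume k: "k < p"
      have du: "dim_vec (u t) = p" for t using uc[of t] by auto
      have ix: "idx p k r < N" using idx_prop[OF k du] unfolding N_def by blast
      have ze: "z t $ idx p k r = (u t $ k) ^ r" for t unfolding z_def using idx_prop[OF k du] by blast
      have "((\<lambda>t. root r \<bar>z t $ idx p k r\<bar>) \<longlongrightarrow> root r \<bar>0\<bar>) at_top"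
        by (intro tendsto_real_root tendsto_rabs zlim ix)
      moreover have "root r \<bar>z t $ idx p k r\<bar> = \<bar>u t $ k\<bar>" for t
        unfolding ze power_abs using r0 by (simp add: real_root_power_cancel)
      ultimately have "((\<lambda>t. \<bar>u t $ k\<bar>) \<longlongrightarrow> 0) at_top" by simp
      then show "((\<lambda>t. u t $ k) \<longlongrightarrow> 0) at_top" by (simp add: tendsto_rabs_zero_iff)
    qed
    define sm where "sm t = (\<Sum>j<n. x t $ j)" for t
    have smc: "\<And>t. t \<ge> 0 \<Longrightarrow> sm t = sm 0"
    proof (rule const_fun[OF _ D])
      show "continuous_on {0..} sm" unfolding sm_def by (intro continuous_intros contx) auto
    next
      fix t :: real assume t: "t > 0" "t \<notin> D"
      have t0: "t \<ge> 0" using t by simp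
      have L: "Lt t \<in> carrier_mat n n" "Lt t \<in> set Ls" using Lc Lt t0 by auto
      have "(sm has_real_derivative (\<Sum>j<n. ((- (Lt t)) *\<^sub>v x t) $ j)) (at t within {0..})"
        unfolding sm_def Lt_def by (intro DERIV_sum derx t0 t(2)) auto
      moreover have "(\<Sum>j<n. ((- (Lt t)) *\<^sub>v x t) $ j) = 0"
      proof -
        have "(\<Sum>j<n. ((- (Lt t)) *\<^sub>v x t) $ j) = - (\<Sum>j<n. \<Sum>l<n. Lt t $$ (j,l) * x t $ l)"
          using L xc[OF t0] by (simp add: scalar_prod_def atLeast0LessThan row_def sum_negf)
        also have "(\<Sum>j<n. \<Sum>l<n. Lt t $$ (j,l) * x t $ l) = (\<Sum>l<n. (\<Sum>j<n. Lt t $$ (j,l)) * x t $ l)"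
          by (subst sum.swap) (simp add: sum_distrib_right)
        also have "\<dots> = 0" using bal_col[of n "Lt t"] bal L by simp
        finally show ?thesis by simp
      qed
      ultimately show "(sm has_real_derivative 0) (at t within {0..})" by simp
    qed
    have xrep: "\<And>t i. t \<ge> 0 \<Longrightarrow> i < n \<Longrightarrow> x t $ i = (\<Sum>k<p. Q $$ (k,i) * u t $ k) + sm 0 / real n"
    proof -
      fix t :: real and i assume t: "t \<ge> 0" and i: "i < n"
      have "(\<Sum>k<p. Q $$ (k,i) * u t $ k) = (\<Sum>k<p. \<Sum>j<n. Q $$ (k,i) * Q $$ (k,j) * x t $ j)"
        using uk[OF t] by (simp add: sum_distrib_left mult.assoc)
      also have "\<dots> = (\<Sum>j<n. (\<Sum>k<p. Q $$ (k,i) * Q $$ (k,j)) * x t $ j)"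
        by (subst sum.swap) (simp add: sum_distrib_right)
      also have "\<dots> = (\<Sum>j<n. ((if i = j then 1 else 0) - 1 / real n) * x t $ j)"
        using QtQ[OF Qdim QQt Q1 n1 i] unfolding p_def by (intro sum.cong) auto
      also have "\<dots> = (\<Sum>j<n. (if i = j then x t $ j else 0) - x t $ j / real n)"
        by (intro sum.cong) (auto simp: algebra_simps)
      also have "\<dots> = x t $ i - sm t / real n"
        using i by (simp add: sum_subtractf sm_def sum_divide_distrib)
      finally show "x t $ i = (\<Sum>k<p. Q $$ (k,i) * u t $ k) + sm 0 / real n" using smc[OF t] by simp
    qed
    show ?thesis
    proof (intro exI[of _ "sm 0 / real n"] allI impI)
      fix i assume i: "i < n"
      have "((\<lambda>t. (\<Sum>k<p. Q $$ (k,i) * u t $ k) + sm 0 / real n) \<longlongrightarrow> (\<Sum>k<p. Q $$ (k,i) * 0) + sm 0 / real n) at_top"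
        by (intro tendsto_intros ulim) auto
      then have lim: "((\<lambda>t. (\<Sum>k<p. Q $$ (k,i) * u t $ k) + sm 0 / real n) \<longlongrightarrow> sm 0 / real n) at_top" by simp
      have "\<forall>\<^sub>F t in at_top. (\<Sum>k<p. Q $$ (k,i) * u t $ k) + sm 0 / real n = x t $ i"
        using eventually_ge_at_top[of "0::real"] by eventually_elim (use xrep i in auto)
      from tendsto_cong[OF this] lim show "((\<lambda>t. x t $ i) \<longlongrightarrow> sm 0 / real n) at_top" by simp
    qed
  qed
qed

end
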